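(* Let $G\le S_n$ be fusion controlled and $C$ a connected component of $\widetilde P_0(G)$, and let $\mathcal T(C)$ be the set of types of vertices of $C$. For $T\in\mathcal T(G_0)$ let $k(T)$ be the number of vertices of $\widetilde P_0(G)$ of type $T$. Then: (i) for all $T,T'\in\mathcal T(C)$, $k(T)/k_C(T)=k(T')/k_C(T')$; (ii) $C$ is isomorphic to its image $\widetilde t(C)$ iff there exists $T\in\mathcal T(C)$ with $k_C(T)=1$ and $k(T)=k(T')$ for every $T'\in\mathcal T(C)$; (iii) if $C$ contains all vertices of $\widetilde P_0(G)$ of some type $T$, then $C$ contains all vertices of type $T'$ for every $T'\in\mathcal T(C)$; (iv) if some $T\in\mathcal T(C)$ satisfies $k_C(T)=k(T)>1$, then $C\not\cong\widetilde t(C)$.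
   Context: $G_0=G\setminus\{1\}$; $[x]=\{y:\langle y\rangle=\langle x\rangle\}$; $\widetilde P_0(G)$: vertex set $\{[x]:x\in G_0\}$, distinct $[x],[y]$ adjacent iff some representatives are one a positive power of the other. For $\psi\in S_n$, $T_\psi$ is the partition of $n$ given by orbit lengths of $\langle\psi\rangle$; the type of $[\psi]$ is $T_\psi$. For $T=[m_1^{t_1},\dots,m_k^{t_k}]$, $T^a=[(m_i/\gcd(a,m_i))^{t_i\gcd(a,m_i)}]_i$. $\mathcal T(G_0)=\{T_\psi:\psi\in G_0\}$; $P_0(\mathcal T(G))$: vertex set $\mathcal T(G_0)$, distinct $T,T'$ adjacent iff one is a power of the other. $\widetilde t(C)$ is the subgraph of $P_0(\mathcal T(G))$ with vertex set $\mathcal T(C)$ and edges $\{T_\psi,T_\varphi\}$ for edges $\{[\psi],[\varphi]\}$ of $C$. $k_C(T)$ is the number of vertices of $C$ of type $T$. $G$ is fusion controlled if for all $\psi\in G$, $x\in S_n$ with $x^{-1}\psi x\in G$ there is $y\in N_{S_n}(G)$ with $x^{-1}\psi x=y^{-1}\psi y$. *)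

theory Defs
  imports Complex_Main "HOL-Combinatorics.Permutations" "HOL-Library.Multiset"
begin

definition Sym :: "nat \<Rightarrow> (nat \<Rightarrow> nat) set" where
  "Sym n = {p. p permutes {..<n}}"

definition is_perm_group :: "nat \<Rightarrow> (nat \<Rightarrow> nat) set \<Rightarrow> bool" where
  "is_perm_group n G \<longleftrightarrow> G \<subseteq> Sym n \<and> id \<in> G \<and>
     (\<forall>p\<in>G. \<forall>q\<in>G. p \<circ> q \<in> G) \<and> (\<forall>p\<in>G. inv p \<in> G)"

definition cyc :: "(nat \<Rightarrow> nat) \<Rightarrow> (nat \<Rightarrow> nat) set" where
  "cyc x = {x ^^ k | k. True}"

definition normalizer :: "nat \<Rightarrow> (nat \<Rightarrow> nat) set \<Rightarrow> (nat \<Rightarrow> nat) set" where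
  "normalizer n G = {y \<in> Sym n. (\<lambda>g. inv y \<circ> g \<circ> y) ` G = G}"

definition fusion_controlled :: "nat \<Rightarrow> (nat \<Rightarrow> nat) set \<Rightarrow> bool" where
  "fusion_controlled n G \<longleftrightarrow>
     (\<forall>\<psi>\<in>G. \<forall>x\<in>Sym n. inv x \<circ> \<psi> \<circ> x \<in> G \<longrightarrow>
        (\<exists>y\<in>normalizer n G. inv x \<circ> \<psi> \<circ> x = inv y \<circ> \<psi> \<circ> y))"

definition nontriv :: "(nat \<Rightarrow> nat) set \<Rightarrow> (nat \<Rightarrow> nat) set" where
  "nontriv G = G - {id}"

definition gen_class :: "(nat \<Rightarrow> nat) set \<Rightarrow> (nat \<Rightarrow> nat) \<Rightarrow> (nat \<Rightarrow> nat) set" where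
  "gen_class G x = {y \<in> G. cyc y = cyc x}"

definition rpg_vertices :: "(nat \<Rightarrow> nat) set \<Rightarrow> (nat \<Rightarrow> nat) set set" where
  "rpg_vertices G = gen_class G ` nontriv G"

definition rpg_adj :: "(nat \<Rightarrow> nat) set \<Rightarrow> (nat \<Rightarrow> nat) set \<Rightarrow> (nat \<Rightarrow> nat) set \<Rightarrow> bool" where
  "rpg_adj G a b \<longleftrightarrow> a \<in> rpg_vertices G \<and> b \<in> rpg_vertices G \<and> a \<noteq> b \<and>
     (\<exists>x\<in>a. \<exists>y\<in>b. (\<exists>k\<ge>1. x = y ^^ k) \<or> (\<exists>k\<ge>1. y = x ^^ k))"

definition is_component :: "'v set \<Rightarrow> ('v \<Rightarrow> 'v \<Rightarrow> bool) \<Rightarrow> 'v set \<Rightarrow> bool" where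
  "is_component V adj C \<longleftrightarrow> (\<exists>v\<in>V. C = {w \<in> V.
      (\<lambda>a b. a \<in> V \<and> b \<in> V \<and> adj a b)\<^sup>*\<^sup>* v w})"

definition orbit_cyc :: "(nat \<Rightarrow> nat) \<Rightarrow> nat \<Rightarrow> nat set" where
  "orbit_cyc \<psi> i = {(\<psi> ^^ k) i | k. True}"

definition perm_type :: "nat \<Rightarrow> (nat \<Rightarrow> nat) \<Rightarrow> nat multiset" where
  "perm_type n \<psi> = image_mset card (mset_set (orbit_cyc \<psi> ` {..<n}))"

text \<open>type of a vertex [psi] (well defined: representatives generate the same cyclic group)\<close>
definition vtype :: "nat \<Rightarrow> (nat \<Rightarrow> nat) set \<Rightarrow> nat multiset" where
  "vtype n v = perm_type n (SOME \<psi>. \<psi> \<in> v)"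

text \<open>k(T): number of vertices of type T; k_C(T): those in C\<close>
definition kcount :: "nat \<Rightarrow> (nat \<Rightarrow> nat) set set \<Rightarrow> nat multiset \<Rightarrow> nat" where
  "kcount n V T = card {v \<in> V. vtype n v = T}"

definition timg_adj :: "nat \<Rightarrow> (nat \<Rightarrow> nat) set \<Rightarrow> (nat \<Rightarrow> nat) set set \<Rightarrow>
    nat multiset \<Rightarrow> nat multiset \<Rightarrow> bool" where
  "timg_adj n G C T T' \<longleftrightarrow>
     (\<exists>a\<in>C. \<exists>b\<in>C. rpg_adj G a b \<and> vtype n a = T \<and> vtype n b = T')"

definition graph_iso :: "'a set \<Rightarrow> ('a \<Rightarrow> 'a \<Rightarrow> bool) \<Rightarrow> 'b set \<Rightarrow> ('b \<Rightarrow> 'b \<Rightarrow> bool) \<Rightarrow> bool" where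
  "graph_iso V1 E1 V2 E2 \<longleftrightarrow>
     (\<exists>f. bij_betw f V1 V2 \<and> (\<forall>x\<in>V1. \<forall>y\<in>V1. E1 x y \<longleftrightarrow> E2 (f x) (f y)))"

end

theory Submission
  imports Defs "HOL-Combinatorics.Orbits"
begin

lemma perm_orbit_eq: "permutation f \<Longrightarrow> orbit_cyc f i = orbit f i"
  unfolding orbit_cyc_def by (simp add: orbit_altdef_permutation)

lemma orb_same: "permutation f \<Longrightarrow> y \<in> orbit f x \<Longrightarrow> orbit f y = orbit f x"
  by (metis cyclic_on_orbit' orbit_cyclic_eq3)

lemma pow_in_orb: "permutation f \<Longrightarrow> (f^^n) s \<in> orbit f s"
  by (rule funpow_in_orbit[OF permutation_self_in_orbit])

lemma per_facts:
  assumes "permutation f"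
  shows "0 < card (orbit f s)" "(f ^^ card (orbit f s)) s = s"
    "inj_on (\<lambda>n. (f^^n) s) {0..<card (orbit f s)}"
    "orbit f s = (\<lambda>n. (f^^n) s) ` {0..<card (orbit f s)}"
proof -
  have s: "s \<in> orbit f s" using assms permutation_self_in_orbit by metis
  have e: "orbit f s = (\<lambda>n. (f^^n) s) ` {0..<funpow_dist1 f s s}"
    using orbit_conv_funpow_dist1[OF s] .
  have i: "inj_on (\<lambda>n. (f^^n) s) {0..<funpow_dist1 f s s}"
    using inj_on_funpow_dist1[OF s] .
  have c: "card (orbit f s) = funpow_dist1 f s s"
    using e i card_image by (metis card_atLeastLessThan diff_zero)
  show "0 < card (orbit f s)" using c by simp
  show "(f ^^ card (orbit f s)) s = s" using c funpow_dist1_prop[OF s] by simp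
  show "inj_on (\<lambda>n. (f^^n) s) {0..<card (orbit f s)}" using c i by simp
  show "orbit f s = (\<lambda>n. (f^^n) s) ` {0..<card (orbit f s)}" using c e by simp
qed

lemma dist_mod:
  assumes "permutation f" "(f^^m) s = a"
  shows "funpow_dist f s a = m mod card (orbit f s)"
proof -
  note P = per_facts[OF assms(1), of s]
  define d where "d = card (orbit f s)"
  have s: "s \<in> orbit f s" using assms permutation_self_in_orbit by metis
  have a: "a \<in> orbit f s" using funpow_in_orbit[OF s, of m] assms(2) by simp
  have m1: "(f ^^ (m mod d)) s = a" using funpow_mod_eq[where f=f and n=d and x=s and m=m] P(2) assms(2) d_def by simp
  have le: "funpow_dist f s a \<le> m mod d" unfolding funpow_dist_def using m1 by (rule Least_le)
  have lt: "m mod d < d" using P(1) d_def by simp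
  have fd: "(f ^^ funpow_dist f s a) s = a" using funpow_dist_prop[OF a] .
  have "funpow_dist f s a = m mod d"
    using P(3) unfolding d_def[symmetric] inj_on_def using le lt fd m1
    by (metis atLeastLessThan_iff le_less_trans zero_le)
  thus ?thesis using d_def by simp
qed

lemma mset_bij:
  assumes "finite X"
  shows "finite Y \<Longrightarrow> image_mset g (mset_set X) = image_mset h (mset_set Y) \<Longrightarrow>
     \<exists>\<beta>. bij_betw \<beta> X Y \<and> (\<forall>x\<in>X. h (\<beta> x) = g x)"
  using assms
proof (induction X arbitrary: Y rule: finite_induct)
  case empty
  then have "Y = {}" by (metis image_mset_is_empty_iff mset_set.infinite mset_set_empty_iff)
  then show ?case by (simp add: bij_betw_def)
next
  case (insert x X)
  have "g x \<in># image_mset h (mset_set Y)"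
    using insert.prems(2) insert.hyps by (metis image_mset_add_mset mset_set.insert union_single_eq_member)
  then obtain y where y: "y \<in> Y" "h y = g x" using insert.prems(1) by (metis finite_set_mset_mset_set imageE set_image_mset)
  have "mset_set Y = add_mset y (mset_set (Y - {y}))" using y insert.prems(1) by (simp add: mset_set.remove)
  then have "image_mset g (mset_set X) = image_mset h (mset_set (Y - {y}))"
    using insert.prems(2) insert.hyps y(2) by simp
  then obtain \<beta> where b: "bij_betw \<beta> X (Y - {y})" "\<forall>x\<in>X. h (\<beta> x) = g x"
    using insert.IH insert.prems(1) by blast
  define \<beta>' where "\<beta>' = \<beta>(x := y)"
  have bb: "bij_betw \<beta>' X (Y - {y})"
  proof -
    have eqX: "\<And>a. a \<in> X \<Longrightarrow> \<beta>' a = \<beta> a" using insert.hyps(2) unfolding \<beta>'_def by auto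
    show ?thesis using b(1) bij_betw_cong[of X \<beta>' \<beta>, OF eqX] by simp
  qed
  have "bij_betw \<beta>' (X \<union> {x}) ((Y - {y}) \<union> {\<beta>' x})"
    using notIn_Un_bij_betw3[of x X \<beta>' "Y - {y}"] bb insert.hyps(2) unfolding \<beta>'_def by simp
  then have "bij_betw \<beta>' (insert x X) (insert y (Y - {y}))"
    unfolding \<beta>'_def by simp
  moreover have "insert y (Y - {y}) = Y" using y by blast
  ultimately show ?case using b(2) y(2) unfolding \<beta>'_def
    by (metis fun_upd_apply insert_iff)
qed


lemma conj_exists:
  assumes A: "finite A" and p: "p permutes A" and q: "q permutes A"
    and T: "image_mset card (mset_set (orbit_cyc p ` A)) = image_mset card (mset_set (orbit_cyc q ` A))"
  shows "\<exists>x. x permutes A \<and> x \<circ> q = p \<circ> x"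
proof -
  have pp: "permutation p" "permutation q" using A p q permutes_imp_permutation by blast+
  have op: "orbit_cyc p = orbit p" "orbit_cyc q = orbit q" using pp perm_orbit_eq by auto
  obtain \<beta> where bij: "bij_betw \<beta> (orbit q ` A) (orbit p ` A)"
    and cb: "\<forall>P\<in>orbit q ` A. card (\<beta> P) = card P"
    using mset_bij[of "orbit q ` A" "orbit p ` A" card card] A T op by auto
  define rq where "rq P = (SOME j. j \<in> P)" for P :: "nat set"
  define rp where "rp P = (SOME j. j \<in> P)" for P :: "nat set"
  define x where "x a = (if a \<in> A then (p ^^ funpow_dist q (rq (orbit q a)) a) (rp (\<beta> (orbit q a))) else a)" for a
  have key: "rq (orbit q a) \<in> orbit q a \<and> orbit q (rq (orbit q a)) = orbit q a \<and>
       a \<in> orbit q (rq (orbit q a)) \<and>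
       rp (\<beta> (orbit q a)) \<in> \<beta> (orbit q a) \<and> orbit p (rp (\<beta> (orbit q a))) = \<beta> (orbit q a) \<and>
       card (orbit p (rp (\<beta> (orbit q a)))) = card (orbit q (rq (orbit q a))) \<and>
       \<beta> (orbit q a) \<subseteq> A" if a: "a \<in> A" for a
  proof -
    have j: "rq (orbit q a) \<in> orbit q a" unfolding rq_def using orbit_nonempty by (metis ex_in_conv someI)
    have oj: "orbit q (rq (orbit q a)) = orbit q a" using orb_same[OF pp(2) j] .
    have aa: "a \<in> orbit q a" using pp(2) permutation_self_in_orbit by metis
    have bin: "\<beta> (orbit q a) \<in> orbit p ` A" using bij a bij_betwE by blast
    then obtain c where c: "c \<in> A" "\<beta> (orbit q a) = orbit p c" by blast
    have i: "rp (\<beta> (orbit q a)) \<in> \<beta> (orbit q a)" unfolding rp_def c(2) using orbit_nonempty by (metis ex_in_conv someI)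
    have oi: "orbit p (rp (\<beta> (orbit q a))) = \<beta> (orbit q a)" using orb_same[OF pp(1)] i c(2) by metis
    have cc: "card (\<beta> (orbit q a)) = card (orbit q a)" using cb a by blast
    have sub: "\<beta> (orbit q a) \<subseteq> A" using c permutes_orbit_subset[OF p] by metis
    show ?thesis using j oj aa i oi cc sub by simp
  qed
  have comm: "x (q a) = p (x a)" if a: "a \<in> A" for a
  proof -
    define j where "j = rq (orbit q a)"
    define i where "i = rp (\<beta> (orbit q a))"
    define k where "k = funpow_dist q j a"
    have qa: "q a \<in> A" using a by (simp add: permutes_in_image[OF q])
    have oqa: "orbit q (q a) = orbit q a" using permutation_orbit_step[OF pp(2)] .
    note K = key[OF a, folded j_def i_def]
    have aj: "a \<in> orbit q j" using K by blast
    have qk: "(q ^^ k) j = a" unfolding k_def using funpow_dist_prop[OF aj] .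
    have sk: "(q ^^ Suc k) j = q a" using qk by simp
    have K6: "card (orbit p i) = card (orbit q j)" using K by blast
    have ds: "funpow_dist q j (q a) = Suc k mod card (orbit p i)"
      using dist_mod[OF pp(2) sk] K6 by simp
    have "x (q a) = (p ^^ (Suc k mod card (orbit p i))) i"
      unfolding x_def using qa oqa ds j_def i_def by simp
    also have "\<dots> = (p ^^ Suc k) i" using funpow_mod_eq per_facts(2)[OF pp(1)] by metis
    also have "\<dots> = p (x a)" unfolding x_def using a k_def j_def i_def by simp
    finally show ?thesis .
  qed
  have xq: "x \<circ> q = p \<circ> x"
  proof
    fix a show "(x \<circ> q) a = (p \<circ> x) a"
    proof (cases "a \<in> A")
      case True then show ?thesis using comm by simp
    next
      case False
      then have "q a = a" "p a = a" using p q permutes_not_in by metis+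
      then show ?thesis using False unfolding x_def by simp
    qed
  qed
  have xA: "x a \<in> A" if a: "a \<in> A" for a
  proof -
    note K = key[OF a]
    have "x a \<in> orbit p (rp (\<beta> (orbit q a)))" unfolding x_def using a
      pow_in_orb[OF pp(1)] by simp
    then show ?thesis using K by blast
  qed
  have dlt: "funpow_dist q (rq (orbit q a)) a < card (orbit q (rq (orbit q a)))" if a: "a \<in> A" for a
    using dist_mod[OF pp(2) funpow_dist_prop] key[OF a] per_facts(1)[OF pp(2)]
    by (metis mod_less_divisor)
  have inj: "inj_on x A"
  proof
    fix a b assume a: "a \<in> A" and b: "b \<in> A" and e: "x a = x b"
    note Ka = key[OF a] and Kb = key[OF b]
    have xa: "x a \<in> \<beta> (orbit q a)" unfolding x_def using a Ka
      pow_in_orb[OF pp(1)] by auto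
    have xb: "x b \<in> \<beta> (orbit q b)" unfolding x_def using b Kb
      pow_in_orb[OF pp(1)] by auto
    have "\<beta> (orbit q a) = \<beta> (orbit q b)"
      using orb_same[OF pp(1), of "x a"] xa xb e Ka Kb by metis
    then have ob: "orbit q a = orbit q b" using bij a b unfolding bij_betw_def inj_on_def by blast
    define j where "j = rq (orbit q a)"
    define i where "i = rp (\<beta> (orbit q a))"
    have ea: "x a = (p ^^ funpow_dist q j a) i" unfolding x_def j_def i_def using a by simp
    have eb: "x b = (p ^^ funpow_dist q j b) i" unfolding x_def j_def i_def using b ob by simp
    have ci: "card (orbit p i) = card (orbit q j)" using Ka unfolding j_def i_def by blast
    have la0: "funpow_dist q j a < card (orbit q j)" using dlt[OF a] unfolding j_def .
    have lb0: "funpow_dist q j b < card (orbit q j)" using dlt[OF b] ob unfolding j_def by metis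
    have la: "funpow_dist q j a < card (orbit p i)" using la0 ci by linarith
    have lb: "funpow_dist q j b < card (orbit p i)" using lb0 ci by linarith
    have "funpow_dist q j a = funpow_dist q j b"
      using per_facts(3)[OF pp(1), of i] la lb ea eb e unfolding inj_on_def by simp
    then show "a = b" using funpow_dist_prop Ka Kb ob unfolding j_def by metis
  qed
  have "x ` A = A" using endo_inj_surj[OF A _ inj] xA by blast
  then have "bij_betw x A A" using inj bij_betw_def by blast
  moreover have "\<And>a. a \<notin> A \<Longrightarrow> x a = a" unfolding x_def by simp
  ultimately have "x permutes A" by (rule bij_imp_permutes)
  then show ?thesis using xq by blast
qed


definition conj :: "(nat \<Rightarrow> nat) \<Rightarrow> (nat \<Rightarrow> nat) \<Rightarrow> (nat \<Rightarrow> nat)" where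
  "conj y g = inv y \<circ> g \<circ> y"

definition act :: "(nat \<Rightarrow> nat) \<Rightarrow> (nat \<Rightarrow> nat) set \<Rightarrow> (nat \<Rightarrow> nat) set" where
  "act y v = conj y ` v"

lemma conj_inv: "bij y \<Longrightarrow> conj (inv y) (conj y g) = g"
  by (auto simp: conj_def fun_eq_iff inv_inv_eq bij_is_surj surj_f_inv_f bij_is_inj)

lemma conj_inj: "bij y \<Longrightarrow> inj (conj y)"
  by (metis conj_inv injI)

lemma conj_id: "bij y \<Longrightarrow> conj y id = id"
  by (auto simp: conj_def fun_eq_iff bij_is_inj)

lemma conj_pow: "bij y \<Longrightarrow> (conj y g) ^^ k = conj y (g ^^ k)"
proof (induction k)
  case 0 then show ?case by (simp add: fun_eq_iff conj_def bij_is_inj)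
next
  case (Suc k)
  then show ?case by (auto simp: conj_def fun_eq_iff bij_is_surj surj_f_inv_f)
qed

lemma cyc_conj: "bij y \<Longrightarrow> cyc (conj y g) = conj y ` cyc g"
  unfolding cyc_def by (auto simp: conj_pow)

lemma Sym_bij: "y \<in> Sym n \<Longrightarrow> bij y"
  unfolding Sym_def by (auto intro: permutes_bij)

lemma N_facts:
  assumes "y \<in> normalizer n G"
  shows "y \<in> Sym n" "bij y" "conj y ` G = G"
proof -
  have e: "(\<lambda>g. inv y \<circ> g \<circ> y) = conj y" by (auto simp: conj_def)
  show "y \<in> Sym n" using assms unfolding normalizer_def by auto
  then show "bij y" by (rule Sym_bij)
  have h: "(\<lambda>g. inv y \<circ> g \<circ> y) ` G = G" using assms unfolding normalizer_def by auto
  show "conj y ` G = G" using h by (subst (asm) e)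
qed

lemma inv_in_N:
  assumes y: "y \<in> normalizer n G"
  shows "inv y \<in> normalizer n G"
proof -
  note Y = N_facts[OF y]
  have s: "inv y \<in> Sym n" using Y(1) unfolding Sym_def by (auto intro: permutes_inv)
  have "conj (inv y) ` G = conj (inv y) ` conj y ` G" using Y(3) by simp
  also have "\<dots> = G" using conj_inv[OF Y(2)] by (simp add: image_image)
  finally have "conj (inv y) ` G = G" .
  moreover have e: "(\<lambda>g. inv (inv y) \<circ> g \<circ> inv y) = conj (inv y)" by (auto simp: conj_def)
  ultimately have "(\<lambda>g. inv (inv y) \<circ> g \<circ> inv y) ` G = G" by (subst e)
  then show ?thesis using s unfolding normalizer_def by blast
qed

lemma id_in_N: "id \<in> normalizer n G"
proof -
  have "(\<lambda>g. inv id \<circ> g \<circ> id) = (\<lambda>g::nat\<Rightarrow>nat. g)" by (auto simp: inv_id)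
  then show ?thesis unfolding normalizer_def Sym_def by (auto simp: permutes_id)
qed

lemma conj_in_G: "y \<in> normalizer n G \<Longrightarrow> x \<in> G \<Longrightarrow> conj y x \<in> G"
  using N_facts(3) by blast

lemma act_gc:
  assumes y: "y \<in> normalizer n G" and x: "x \<in> G"
  shows "act y (gen_class G x) = gen_class G (conj y x)"
proof -
  note Y = N_facts[OF y]
  show ?thesis
  proof
    show "act y (gen_class G x) \<subseteq> gen_class G (conj y x)"
      unfolding act_def gen_class_def using cyc_conj[OF Y(2)] conj_in_G[OF y] by auto
  next
    show "gen_class G (conj y x) \<subseteq> act y (gen_class G x)"
    proof
      fix w assume w: "w \<in> gen_class G (conj y x)"
      then have wG: "w \<in> G" and cw: "cyc w = cyc (conj y x)" unfolding gen_class_def by auto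
      then obtain z where z: "z \<in> G" "w = conj y z" using Y(3) by blast
      have "conj y ` cyc z = conj y ` cyc x" using cw z cyc_conj[OF Y(2)] by simp
      then have "cyc z = cyc x" using conj_inj[OF Y(2)] by (simp add: inj_image_eq_iff)
      then show "w \<in> act y (gen_class G x)" unfolding act_def gen_class_def using z by auto
    qed
  qed
qed

lemma V_elem: "v \<in> rpg_vertices G \<Longrightarrow> \<exists>x\<in>G. x \<noteq> id \<and> v = gen_class G x"
  unfolding rpg_vertices_def nontriv_def by auto

lemma act_V:
  assumes y: "y \<in> normalizer n G" and v: "v \<in> rpg_vertices G"
  shows "act y v \<in> rpg_vertices G"
proof -
  note Y = N_facts[OF y]
  obtain x where x: "x \<in> G" "x \<noteq> id" "v = gen_class G x" using V_elem[OF v] by blast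
  have "conj y x \<noteq> id" using x(2) conj_inj[OF Y(2)] conj_id[OF Y(2)] by (metis injD)
  then show ?thesis using act_gc[OF y x(1)] x conj_in_G[OF y x(1)]
    unfolding rpg_vertices_def nontriv_def by auto
qed

lemma act_inv: "bij y \<Longrightarrow> act (inv y) (act y v) = v"
  unfolding act_def by (simp add: image_image conj_inv)

lemma act_inj: "bij y \<Longrightarrow> inj (act y)"
  by (metis act_inv injI)

lemma adj_act:
  assumes y: "y \<in> normalizer n G" and a: "rpg_adj G a b"
  shows "rpg_adj G (act y a) (act y b)"
proof -
  note Y = N_facts[OF y]
  from a have av: "a \<in> rpg_vertices G" "b \<in> rpg_vertices G" "a \<noteq> b"
    and ex: "\<exists>x\<in>a. \<exists>z\<in>b. (\<exists>k\<ge>1. x = z ^^ k) \<or> (\<exists>k\<ge>1. z = x ^^ k)"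
    unfolding rpg_adj_def by auto
  have "act y a \<noteq> act y b" using av(3) act_inj[OF Y(2)] by (metis injD)
  moreover have "\<exists>x\<in>act y a. \<exists>z\<in>act y b. (\<exists>k\<ge>1. x = z ^^ k) \<or> (\<exists>k\<ge>1. z = x ^^ k)"
  proof -
    obtain x z where xz: "x \<in> a" "z \<in> b" "(\<exists>k\<ge>1. x = z ^^ k) \<or> (\<exists>k\<ge>1. z = x ^^ k)" using ex by blast
    have "conj y x \<in> act y a" "conj y z \<in> act y b" using xz unfolding act_def by auto
    moreover have "(\<exists>k\<ge>1. conj y x = conj y z ^^ k) \<or> (\<exists>k\<ge>1. conj y z = conj y x ^^ k)"
      using xz(3) conj_pow[OF Y(2)] by metis
    ultimately show ?thesis by blast
  qed
  ultimately show ?thesis using act_V[OF y] av unfolding rpg_adj_def by auto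
qed

lemma vtype_gc:
  assumes x: "x \<in> G"
  shows "vtype n (gen_class G x) = perm_type n x"
proof -
  define \<psi> where "\<psi> = (SOME \<psi>. \<psi> \<in> gen_class G x)"
  have "x \<in> gen_class G x" using x unfolding gen_class_def by auto
  then have "\<psi> \<in> gen_class G x" unfolding \<psi>_def by (metis someI)
  then have c: "cyc \<psi> = cyc x" unfolding gen_class_def by auto
  have "orbit_cyc \<psi> i = (\<lambda>f. f i) ` cyc \<psi>" for \<psi> i unfolding orbit_cyc_def cyc_def by auto
  then have "orbit_cyc \<psi> = orbit_cyc x" using c by auto
  then show ?thesis unfolding vtype_def \<psi>_def[symmetric] perm_type_def by simp
qed

lemma perm_type_conj:
  assumes y: "y \<in> Sym n"
  shows "perm_type n (conj y x) = perm_type n x"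
proof -
  have b: "bij y" using Sym_bij[OF y] .
  have yp: "y permutes {..<n}" using y unfolding Sym_def by auto
  have o: "orbit_cyc (conj y x) i = inv y ` orbit_cyc x (y i)" for i
    unfolding orbit_cyc_def using conj_pow[OF b] by (auto simp: conj_def)
  have "orbit_cyc (conj y x) ` {..<n} = image (inv y) ` (orbit_cyc x ` (y ` {..<n}))"
    using o by (auto simp: image_image)
  also have "y ` {..<n} = {..<n}" using permutes_image[OF yp] .
  finally have e: "orbit_cyc (conj y x) ` {..<n} = image (inv y) ` (orbit_cyc x ` {..<n})" .
  have ii: "inj (inv y)" using b bij_imp_bij_inv bij_is_inj by blast
  have ij: "inj (image (inv y))" using ii by (simp add: inj_image_eq_iff inj_def)
  have "mset_set (image (inv y) ` (orbit_cyc x ` {..<n})) = image_mset (image (inv y)) (mset_set (orbit_cyc x ` {..<n}))"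
    using ij by (simp add: image_mset_mset_set inj_on_subset)
  then have "perm_type n (conj y x) = image_mset (card \<circ> image (inv y)) (mset_set (orbit_cyc x ` {..<n}))"
    unfolding perm_type_def e by (simp add: multiset.map_comp)
  also have "\<dots> = perm_type n x" unfolding perm_type_def
    using ii by (intro image_mset_cong) (simp add: card_image inj_on_subset)
  finally show ?thesis .
qed

lemma vtype_act:
  assumes y: "y \<in> normalizer n G" and v: "v \<in> rpg_vertices G"
  shows "vtype n (act y v) = vtype n v"
proof -
  obtain x where x: "x \<in> G" "x \<noteq> id" "v = gen_class G x" using V_elem[OF v] by blast
  show ?thesis using x act_gc[OF y x(1)] vtype_gc conj_in_G[OF y x(1)]
    perm_type_conj[OF N_facts(1)[OF y]] by simp
qed

lemma trans_type:
  assumes grp: "is_perm_group n G" and fc: "fusion_controlled n G"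
    and u: "u \<in> rpg_vertices G" and w: "w \<in> rpg_vertices G" and t: "vtype n w = vtype n u"
  shows "\<exists>y\<in>normalizer n G. w = act y u"
proof -
  obtain \<psi> where p: "\<psi> \<in> G" "u = gen_class G \<psi>" using V_elem[OF u] by blast
  obtain \<phi> where f: "\<phi> \<in> G" "w = gen_class G \<phi>" using V_elem[OF w] by blast
  have GS: "G \<subseteq> Sym n" using grp unfolding is_perm_group_def by auto
  have pt: "perm_type n \<psi> = perm_type n \<phi>" using t p f vtype_gc by metis
  have pp: "\<psi> permutes {..<n}" "\<phi> permutes {..<n}" using GS p f unfolding Sym_def by auto
  obtain x where x: "x permutes {..<n}" "x \<circ> \<phi> = \<psi> \<circ> x"
    using conj_exists[OF _ pp] pt unfolding perm_type_def by auto
  have bx: "bij x" using x(1) permutes_bij by blast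
  have "conj x \<psi> = \<phi>" using x(2) bx
    by (metis conj_def comp_assoc bij_is_inj inv_o_cancel id_comp)
  moreover have xs: "x \<in> Sym n" using x(1) unfolding Sym_def by auto
  ultimately obtain y where y: "y \<in> normalizer n G" "conj x \<psi> = conj y \<psi>"
    using fc p(1) f(1) unfolding fusion_controlled_def conj_def by metis
  have "w = act y u" using act_gc[OF y(1) p(1)] y(2) \<open>conj x \<psi> = \<phi>\<close> f p by simp
  then show ?thesis using y(1) by blast
qed


definition Rel :: "(nat \<Rightarrow> nat) set \<Rightarrow> (nat \<Rightarrow> nat) set \<Rightarrow> (nat \<Rightarrow> nat) set \<Rightarrow> bool" where
  "Rel G = (\<lambda>a b. a \<in> rpg_vertices G \<and> b \<in> rpg_vertices G \<and> rpg_adj G a b)"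

definition comp :: "(nat \<Rightarrow> nat) set \<Rightarrow> (nat \<Rightarrow> nat) set \<Rightarrow> (nat \<Rightarrow> nat) set set" where
  "comp G v = {w \<in> rpg_vertices G. (Rel G)\<^sup>*\<^sup>* v w}"

lemma Rel_sym: "Rel G a b \<Longrightarrow> Rel G b a"
  unfolding Rel_def rpg_adj_def by blast

lemma Rstar_sym: "(Rel G)\<^sup>*\<^sup>* a b \<Longrightarrow> (Rel G)\<^sup>*\<^sup>* b a"
proof (induction rule: rtranclp.induct)
  case (rtrancl_refl a) then show ?case by simp
next
  case (rtrancl_into_rtrancl a b c)
  then show ?case using Rel_sym converse_rtranclp_into_rtranclp by metis
qed

lemma Rstar_act:
  assumes y: "y \<in> normalizer n G"
  shows "(Rel G)\<^sup>*\<^sup>* a b \<Longrightarrow> (Rel G)\<^sup>*\<^sup>* (act y a) (act y b)"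
proof (induction rule: rtranclp.induct)
  case (rtrancl_refl a) then show ?case by simp
next
  case (rtrancl_into_rtrancl a b c)
  have "Rel G (act y b) (act y c)"
    using rtrancl_into_rtrancl(2) act_V[OF y] adj_act[OF y] unfolding Rel_def by auto
  then show ?case using rtrancl_into_rtrancl(3) by (metis rtranclp.rtrancl_into_rtrancl)
qed

lemma comp_self: "v \<in> rpg_vertices G \<Longrightarrow> v \<in> comp G v"
  unfolding comp_def by simp

lemma comp_eq:
  assumes "w \<in> comp G v" shows "comp G w = comp G v"
proof -
  have r: "(Rel G)\<^sup>*\<^sup>* v w" using assms unfolding comp_def by auto
  show ?thesis unfolding comp_def using r Rstar_sym[OF r]
    by (auto intro: rtranclp_trans)
qed

lemma comp_meet:
  assumes "u \<in> comp G v" "u \<in> comp G v'" shows "comp G v = comp G v'"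
  using comp_eq assms by metis

lemma comp_act:
  assumes y: "y \<in> normalizer n G" and v: "v \<in> rpg_vertices G"
  shows "act y ` comp G v = comp G (act y v)"
proof
  show "act y ` comp G v \<subseteq> comp G (act y v)"
    unfolding comp_def using act_V[OF y] Rstar_act[OF y] by auto
next
  show "comp G (act y v) \<subseteq> act y ` comp G v"
  proof
    fix w assume w: "w \<in> comp G (act y v)"
    have by': "bij y" using N_facts(2)[OF y] .
    have yi: "inv y \<in> normalizer n G" using inv_in_N[OF y] .
    have wV: "w \<in> rpg_vertices G" and r: "(Rel G)\<^sup>*\<^sup>* (act y v) w" using w unfolding comp_def by auto
    have "(Rel G)\<^sup>*\<^sup>* (act (inv y) (act y v)) (act (inv y) w)" using Rstar_act[OF yi r] .
    then have r2: "(Rel G)\<^sup>*\<^sup>* v (act (inv y) w)" using act_inv[OF by'] by simp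
    have w'V: "act (inv y) w \<in> rpg_vertices G" using act_V[OF yi wV] .
    have "act y (act (inv y) w) = w"
      using act_inv[OF N_facts(2)[OF yi], of w] inv_inv_eq[OF by'] by simp
    then show "w \<in> act y ` comp G v" using r2 w'V unfolding comp_def by force
  qed
qed

lemma finite_G: "is_perm_group n G \<Longrightarrow> finite G"
proof -
  assume "is_perm_group n G"
  then have "G \<subseteq> Sym n" unfolding is_perm_group_def by auto
  moreover have "finite (Sym n)" unfolding Sym_def by (rule finite_permutations) simp
  ultimately show ?thesis by (rule finite_subset)
qed

lemma finite_V: "is_perm_group n G \<Longrightarrow> finite (rpg_vertices G)"
  unfolding rpg_vertices_def nontriv_def using finite_G by auto


theorem corollary6p7:
  fixes n :: nat and G :: "(nat \<Rightarrow> nat) set" and C :: "(nat \<Rightarrow> nat) set set"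
  assumes "is_perm_group n G"
    and "fusion_controlled n G"
    and "is_component (rpg_vertices G) (rpg_adj G) C"
  defines "TC \<equiv> vtype n ` C"
    and "k \<equiv> kcount n (rpg_vertices G)"
    and "kC \<equiv> kcount n C"
  shows "(\<forall>T\<in>TC. \<forall>T'\<in>TC. real (k T) / real (kC T) = real (k T') / real (kC T'))
    \<and> (graph_iso C (rpg_adj G) TC (timg_adj n G C) \<longleftrightarrow>
         (\<exists>T\<in>TC. kC T = 1 \<and> (\<forall>T'\<in>TC. k T = k T')))
    \<and> ((\<exists>T. {v \<in> rpg_vertices G. vtype n v = T} \<noteq> {} \<and>
              {v \<in> rpg_vertices G. vtype n v = T} \<subseteq> C) \<longrightarrow>
         (\<forall>T'\<in>TC. {v \<in> rpg_vertices G. vtype n v = T'} \<subseteq> C))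
    \<and> ((\<exists>T\<in>TC. kC T = k T \<and> k T > 1) \<longrightarrow>
         \<not> graph_iso C (rpg_adj G) TC (timg_adj n G C))"
proof -
  note grp = assms(1) and fc = assms(2)
  let ?V = "rpg_vertices G"
  let ?N = "normalizer n G"
  obtain c where c: "c \<in> ?V" "C = comp G c"
    using assms(3) unfolding is_component_def comp_def Rel_def by auto
  have CV: "C \<subseteq> ?V" unfolding c comp_def by auto
  have cC: "c \<in> C" using c comp_self by metis
  have finV: "finite ?V" using finite_V[OF grp] .
  have finC: "finite C" using finite_subset[OF CV finV] .
  define S where "S T = {v \<in> ?V. vtype n v = T}" for T
  define SC where "SC T = {v \<in> C. vtype n v = T}" for T
  have kS: "k T = card (S T)" for T unfolding k_def kcount_def S_def by simp
  have kCS: "kC T = card (SC T)" for T unfolding kC_def kcount_def SC_def by simp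
  define Os where "Os = (\<lambda>y. act y ` C) ` ?N"
  have Ocomp: "act y ` C = comp G (act y c)" if y: "y \<in> ?N" for y
    using comp_act[OF y c(1)] c(2) by simp
  have OV: "D \<subseteq> ?V" if "D \<in> Os" for D
    using that act_V CV unfolding Os_def by blast
  have finO: "finite Os"
  proof -
    have "Os \<subseteq> Pow ?V" using OV by blast
    then show ?thesis using finV by (meson finite_Pow_iff finite_subset)
  qed
  have count: "k T = card Os * kC T" if T: "T \<in> TC" for T
  proof -
    obtain u where u: "u \<in> C" "vtype n u = T" using T unfolding TC_def by auto
    define F where "F D = {v \<in> D. vtype n v = T}" for D
    have union: "S T = (\<Union>D\<in>Os. F D)"
    proof
      show "S T \<subseteq> (\<Union>D\<in>Os. F D)"
      proof
        fix v assume v: "v \<in> S T"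
        then have vV: "v \<in> ?V" and vt: "vtype n v = vtype n u" unfolding S_def using u by auto
        obtain y where y: "y \<in> ?N" "v = act y u" using trans_type[OF grp fc _ vV vt] u CV by blast
        have "act y ` C \<in> Os" unfolding Os_def using y by blast
        moreover have "v \<in> F (act y ` C)" unfolding F_def using y u vt by auto
        ultimately show "v \<in> (\<Union>D\<in>Os. F D)" by blast
      qed
      show "(\<Union>D\<in>Os. F D) \<subseteq> S T" unfolding F_def S_def using OV by blast
    qed
    have disj: "F D \<inter> F D' = {}" if DD: "D \<in> Os" "D' \<in> Os" "D \<noteq> D'" for D D'
    proof -
      obtain y y' where "y \<in> ?N" "y' \<in> ?N" "D = comp G (act y c)" "D' = comp G (act y' c)"
        using DD(1,2) Ocomp unfolding Os_def by blast
      then show ?thesis using comp_meet DD(3) unfolding F_def by blast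
    qed
    have each: "card (F D) = kC T" if D: "D \<in> Os" for D
    proof -
      obtain y where y: "y \<in> ?N" "D = act y ` C" using D unfolding Os_def by blast
      have "F D = act y ` SC T"
        unfolding F_def SC_def y(2) using vtype_act[OF y(1)] CV by auto
      moreover have "inj_on (act y) (SC T)" using act_inj[OF N_facts(2)[OF y(1)]] inj_on_subset by blast
      ultimately show ?thesis using kCS card_image by metis
    qed
    have finF: "finite (F D)" if "D \<in> Os" for D
      using finite_subset[OF OV[OF that] finV] unfolding F_def by auto
    have "card (\<Union>D\<in>Os. F D) = (\<Sum>D\<in>Os. card (F D))"
      by (rule card_UN_disjoint[OF finO]) (use finF disj in blast)+
    then have "card (S T) = (\<Sum>D\<in>Os. card (F D))" unfolding union .
    also have "\<dots> = card Os * kC T" using each by simp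
    finally show ?thesis using kS by simp
  qed
  have kCpos: "kC T > 0" if T: "T \<in> TC" for T
  proof -
    obtain u where u: "u \<in> C" "vtype n u = T" using T unfolding TC_def by auto
    then have "SC T \<noteq> {}" unfolding SC_def by auto
    moreover have "finite (SC T)" using finC unfolding SC_def by auto
    ultimately show ?thesis using kCS by (simp add: card_gt_0_iff)
  qed
  have Opos: "card Os > 0"
  proof -
    have "act id ` C \<in> Os" unfolding Os_def using id_in_N by blast
    then show ?thesis using finO card_gt_0_iff by blast
  qed
  have ratio: "real (k T) / real (kC T) = real (card Os)" if "T \<in> TC" for T
    using count[OF that] kCpos[OF that] by simp
  have P1: "\<forall>T\<in>TC. \<forall>T'\<in>TC. real (k T) / real (kC T) = real (k T') / real (kC T')"
    using ratio by simp
  have iso_inj: "inj_on (vtype n) C" if GI: "graph_iso C (rpg_adj G) TC (timg_adj n G C)"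
  proof -
    obtain f where "bij_betw f C TC" using GI unfolding graph_iso_def by blast
    then have "card C = card TC" by (rule bij_betw_same_card)
    then show ?thesis using finC eq_card_imp_inj_on unfolding TC_def by metis
  qed
  have inj_iso: "graph_iso C (rpg_adj G) TC (timg_adj n G C)" if I: "inj_on (vtype n) C"
  proof -
    have "bij_betw (vtype n) C TC" using I unfolding TC_def bij_betw_def by simp
    moreover have "\<forall>x\<in>C. \<forall>y\<in>C. rpg_adj G x y \<longleftrightarrow> timg_adj n G C (vtype n x) (vtype n y)"
    proof (intro ballI iffI)
      fix x y assume "x \<in> C" "y \<in> C" "rpg_adj G x y"
      then show "timg_adj n G C (vtype n x) (vtype n y)" unfolding timg_adj_def by blast
    next
      fix x y assume xy: "x \<in> C" "y \<in> C" and "timg_adj n G C (vtype n x) (vtype n y)"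
      then obtain a b where "a \<in> C" "b \<in> C" "rpg_adj G a b" "vtype n a = vtype n x" "vtype n b = vtype n y"
        unfolding timg_adj_def by blast
      then show "rpg_adj G x y" using I xy unfolding inj_on_def by metis
    qed
    ultimately show ?thesis unfolding graph_iso_def by blast
  qed
  have inj_one: "kC T = 1" if I: "inj_on (vtype n) C" and T: "T \<in> TC" for T
  proof -
    obtain u where u: "u \<in> C" "vtype n u = T" using T unfolding TC_def by auto
    have "SC T = {u}" unfolding SC_def using u I unfolding inj_on_def by auto
    then show ?thesis using kCS by simp
  qed
  have one_inj: "inj_on (vtype n) C" if O: "\<forall>T\<in>TC. kC T = 1"
  proof
    fix v w assume v: "v \<in> C" and w: "w \<in> C" and e: "vtype n v = vtype n w"
    have T: "vtype n v \<in> TC" unfolding TC_def using v by blast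
    have "card (SC (vtype n v)) = 1" using O T kCS by simp
    moreover have "v \<in> SC (vtype n v)" "w \<in> SC (vtype n v)" unfolding SC_def using v w e by auto
    ultimately show "v = w" by (metis card_1_singletonE singletonD)
  qed
  have P2: "graph_iso C (rpg_adj G) TC (timg_adj n G C) \<longleftrightarrow>
         (\<exists>T\<in>TC. kC T = 1 \<and> (\<forall>T'\<in>TC. k T = k T'))"
  proof
    assume iso: "graph_iso C (rpg_adj G) TC (timg_adj n G C)"
    have I: "inj_on (vtype n) C" using iso_inj[OF iso] .
    have T: "vtype n c \<in> TC" unfolding TC_def using cC by blast
    have "\<forall>T'\<in>TC. k T' = card Os" using count inj_one[OF I] by simp
    then show "\<exists>T\<in>TC. kC T = 1 \<and> (\<forall>T'\<in>TC. k T = k T')"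
      using T inj_one[OF I T] by metis
  next
    assume "\<exists>T\<in>TC. kC T = 1 \<and> (\<forall>T'\<in>TC. k T = k T')"
    then obtain T where T: "T \<in> TC" "kC T = 1" "\<forall>T'\<in>TC. k T = k T'" by blast
    have "kC T' = 1" if T': "T' \<in> TC" for T'
    proof -
      have "card Os * kC T' = card Os * 1" using count[OF T'] count[OF T(1)] T(2,3) T' by metis
      then show ?thesis using Opos by simp
    qed
    then show "graph_iso C (rpg_adj G) TC (timg_adj n G C)" using inj_iso one_inj by blast
  qed
  have P3: "(\<exists>T. S T \<noteq> {} \<and> S T \<subseteq> C) \<longrightarrow> (\<forall>T'\<in>TC. S T' \<subseteq> C)"
  proof (intro impI ballI)
    assume "\<exists>T. S T \<noteq> {} \<and> S T \<subseteq> C"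
    then obtain T where T: "S T \<noteq> {}" "S T \<subseteq> C" by blast
    then obtain u where u: "u \<in> S T" by blast
    have TT: "T \<in> TC" using u T unfolding S_def TC_def by auto
    have "S T = SC T" using T(2) CV unfolding S_def SC_def by blast
    then have "k T = kC T" using kS kCS by simp
    then have O1: "card Os = 1" using count[OF TT] kCpos[OF TT] by simp
    fix T' assume T': "T' \<in> TC"
    have e: "card (S T') = card (SC T')" using count[OF T'] O1 kS kCS by simp
    have sub: "SC T' \<subseteq> S T'" using CV unfolding S_def SC_def by blast
    have "finite (S T')" using finV unfolding S_def by auto
    then have "SC T' = S T'" using card_subset_eq[OF _ sub e[symmetric]] by simp
    then show "S T' \<subseteq> C" unfolding SC_def by blast
  qed
  have P4: "(\<exists>T\<in>TC. kC T = k T \<and> k T > 1) \<longrightarrow> \<not> graph_iso C (rpg_adj G) TC (timg_adj n G C)"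
    using iso_inj inj_one by fastforce
  show ?thesis using P1 P2 P3 P4 unfolding S_def by blast
qed

end
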